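(* Let $n\ge 1$ and consider the NSGA-II with population size $N\ge 4(n+1)$ optimizing \textsc{OneMinMax} (with any way of generating the offspring population $Q_t$). Suppose that in some iteration $t$ the combined population $R_t=P_t\cup Q_t$ contains an individual $x$ with $f(x)=(k,n-k)$ for some $k\in\{0,\dots,n\}$. Then the next parent population $P_{t+1}$ contains an individual $y$ with $f(y)=(k,n-k)$.
   Context: Search space $\{0,1\}^n$; objective $f=(f_1,f_2):\{0,1\}^n\to\mathbb{R}^2$, both objectives maximized. $x$ strictly dominates $y$ if $f_1(x)\ge f_1(y)$, $f_2(x)\ge f_2(y)$ and at least one inequality is strict. Populations are multisets of bit strings; for a population $P$, $f(P)=\{f(x):x\in P\}$. Non-dominated sorting of a population $S$: $F_1$ is the set of individuals of $S$ not strictly dominated by any individual of $S$; inductively, $F_{k+1}$ is the set of individuals of $S\setminus(F_1\cup\dots\cup F_k)$ not strictly dominated by any individual of $S\setminus(F_1\cup\dots\cup F_k)$; the rank of $x$ in $S$ is the $k$ with $x\in F_k$. Crowding distance of the individuals of a set $S$ (computed with respect to $S$): start with $\mathrm{cDis}(x)=0$ for all $x\in S$; for each $i\in\{1,2\}$, sort $S$ in ascending $f_i$-value as $S_{i.1},\dots,S_{i.|S|}$ (ties broken arbitrarily), set $\mathrm{cDis}(S_{i.1})=\mathrm{cDis}(S_{i.|S|})=+\infty$, and for $2\le j\le |S|-1$ add $\frac{f_i(S_{i.j+1})-f_i(S_{i.j-1})}{f_i(S_{i.|S|})-f_i(S_{i.1})}$ to $\mathrm{cDis}(S_{i.j})$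 (if $f_i$ is constant on $S$, these summands are taken to be $0$). The NSGA-II with population size $N$: $P_0$ consists of $N$ independent uniformly random bit strings; in iteration $t=0,1,2,\dots$ it generates an offspring population $Q_t$ of $N$ individuals, sets $R_t=P_t\cup Q_t$ (multiset union, $2N$ individuals), computes the fronts $F_1,F_2,\dots$ of $R_t$, lets $i^*$ be minimal with $\sum_{i\le i^*}|F_i|\ge N$, computes the crowding distance of each individual of $F_i$ ($i\le i^*$) with respect to $F_i$, and sets $P_{t+1}=F_1\cup\dots\cup F_{i^*-1}\cup\tilde F_{i^*}$, where $\tilde F_{i^*}$ consists of the $N-\sum_{i<i^*}|F_i|$ individuals of $F_{i^*}$ with largest crowding distance, ties broken uniformly at random. \textsc{OneMinMax}: $f(x)=(n-\sum_{i=1}^n x_i,\ \sum_{i=1}^n x_i)$. Its Pareto front is $\{(k,n-k):k\in\{0,\dots,n\}\}$; every bit string is Pareto optimal. *)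

theory Defs
  imports Complex_Main "HOL-Library.Extended_Real"
begin

text \<open>Individuals of a combined
population are identified by their positions in a list R (so copies of the
same bit string are distinct individuals, as in the multiset reading).\<close>

definition sdom :: "real \<times> real \<Rightarrow> real \<times> real \<Rightarrow> bool" where
  "sdom a b \<longleftrightarrow> fst a \<ge> fst b \<and> snd a \<ge> snd b \<and> (fst a > fst b \<or> snd a > snd b)"

definition nondom :: "('a \<Rightarrow> real \<times> real) \<Rightarrow> 'a list \<Rightarrow> nat set \<Rightarrow> nat set" where
  "nondom f R S = {i \<in> S. \<not> (\<exists>j\<in>S. sdom (f (R ! j)) (f (R ! i)))}"

primrec remaining :: "('a \<Rightarrow> real \<times> real) \<Rightarrow> 'a list \<Rightarrow> nat \<Rightarrow> nat set" where
  "remaining f R 0 = {..<length R}"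
| "remaining f R (Suc k) = remaining f R k - nondom f R (remaining f R k)"

text \<open>front f R k is the front F_{k+1} of the paper (fronts indexed from 0 here).\<close>
definition front :: "('a \<Rightarrow> real \<times> real) \<Rightarrow> 'a list \<Rightarrow> nat \<Rightarrow> nat set" where
  "front f R k = nondom f R (remaining f R k)"

definition obj :: "nat \<Rightarrow> real \<times> real \<Rightarrow> real" where
  "obj i v = (if i = 0 then fst v else snd v)"

definition is_sorting :: "('a \<Rightarrow> real \<times> real) \<Rightarrow> 'a list \<Rightarrow> nat \<Rightarrow> nat set \<Rightarrow> nat list \<Rightarrow> bool" where
  "is_sorting f R i S \<sigma> \<longleftrightarrow> distinct \<sigma> \<and> set \<sigma> = S \<and> sorted (map (\<lambda>j. obj i (f (R ! j))) \<sigma>)"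

definition cd_contrib :: "('a \<Rightarrow> real \<times> real) \<Rightarrow> 'a list \<Rightarrow> nat \<Rightarrow> nat list \<Rightarrow> nat \<Rightarrow> ereal" where
  "cd_contrib f R i \<sigma> p =
     (let m = length \<sigma>; v = (\<lambda>q. obj i (f (R ! (\<sigma> ! q))));
          lo = v 0; hi = v (m - 1)
      in if p = 0 \<or> p = m - 1 then \<infinity>
         else if hi = lo then 0
         else ereal ((v (p + 1) - v (p - 1)) / (hi - lo)))"

definition pos_in :: "nat list \<Rightarrow> nat \<Rightarrow> nat" where
  "pos_in \<sigma> x = (THE p. p < length \<sigma> \<and> \<sigma> ! p = x)"

definition cdis :: "('a \<Rightarrow> real \<times> real) \<Rightarrow> 'a list \<Rightarrow> nat list \<Rightarrow> nat list \<Rightarrow> nat \<Rightarrow> ereal" where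
  "cdis f R \<sigma>0 \<sigma>1 x = cd_contrib f R 0 \<sigma>0 (pos_in \<sigma>0 x) + cd_contrib f R 1 \<sigma>1 (pos_in \<sigma>1 x)"

text \<open>sel (a set of positions in R) is a possible outcome of the NSGA-II survival
  selection with population size N applied to the combined population R
  (for some tie-breaking in the sortings and in the crowding-distance selection).\<close>
definition nsga2_survivors :: "('a \<Rightarrow> real \<times> real) \<Rightarrow> nat \<Rightarrow> 'a list \<Rightarrow> nat set \<Rightarrow> bool" where
  "nsga2_survivors f N R sel \<longleftrightarrow>
     (\<exists>istar \<sigma>0 \<sigma>1 T.
        istar = (LEAST i. (\<Sum>j\<le>i. card (front f R j)) \<ge> N) \<and>
        is_sorting f R 0 (front f R istar) \<sigma>0 \<and>
        is_sorting f R 1 (front f R istar) \<sigma>1 \<and>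
        T \<subseteq> front f R istar \<and>
        card T = N - (\<Sum>j<istar. card (front f R j)) \<and>
        (\<forall>a\<in>T. \<forall>b\<in>front f R istar - T. cdis f R \<sigma>0 \<sigma>1 b \<le> cdis f R \<sigma>0 \<sigma>1 a) \<and>
        sel = (\<Union>j<istar. front f R j) \<union> T)"

definition next_pop :: "'a list \<Rightarrow> nat set \<Rightarrow> 'a list" where
  "next_pop R sel = map (\<lambda>i. R ! i) (sorted_list_of_set sel)"

text \<open>Parent populations P_t that can occur in a run of the NSGA-II on bit strings
  of length n with population size N (offspring generated in any way).\<close>
inductive nsga2_reachable :: "(bool list \<Rightarrow> real \<times> real) \<Rightarrow> nat \<Rightarrow> nat \<Rightarrow> bool list list \<Rightarrow> bool"
  for f :: "bool list \<Rightarrow> real \<times> real" and n N :: nat where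
  init: "length P = N \<Longrightarrow> \<forall>x\<in>set P. length x = n \<Longrightarrow> nsga2_reachable f n N P"
| step: "nsga2_reachable f n N P \<Longrightarrow> length Q = N \<Longrightarrow> \<forall>x\<in>set Q. length x = n \<Longrightarrow>
         nsga2_survivors f N (P @ Q) sel \<Longrightarrow> nsga2_reachable f n N (next_pop (P @ Q) sel)"

definition oneminmax :: "nat \<Rightarrow> bool list \<Rightarrow> real \<times> real" where
  "oneminmax n x = (real n - real (length (filter id x)), real (length (filter id x)))"

end

theory Submission
  imports Defs
begin

lemma nondom_sub: "nondom f R S \<subseteq> S" unfolding nondom_def by auto

lemma remaining_sub: "remaining f R k \<subseteq> {..<length R}"
  by (induction k) (auto)

lemma front_sub: "front f R k \<subseteq> {..<length R}"
  unfolding front_def using nondom_sub remaining_sub by blast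

lemma survivors_sub: "nsga2_survivors f N R sel \<Longrightarrow> sel \<subseteq> {..<length R}"
  unfolding nsga2_survivors_def using front_sub by blast

lemma set_next_pop: "sel \<subseteq> {..<length R} \<Longrightarrow> set (next_pop R sel) = (\<lambda>i. R!i) ` sel"
  unfolding next_pop_def using finite_subset[OF _ finite_lessThan] by simp

lemma reach_len: "nsga2_reachable f n N P \<Longrightarrow> \<forall>x\<in>set P. length x = n"
proof (induction rule: nsga2_reachable.induct)
  case (init P) then show ?case by simp
next
  case (step P Q sel)
  have "set (next_pop (P @ Q) sel) \<subseteq> set (P @ Q)"
    using set_next_pop[OF survivors_sub[OF step(4)]] survivors_sub[OF step(4)]
    by (auto simp del: set_append)
  then show ?case using step by auto
qed

lemma omm_nodom: "\<not> sdom (oneminmax n a) (oneminmax n b)"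
  unfolding sdom_def oneminmax_def by auto

lemma front0: "front (oneminmax n) R 0 = {..<length R}"
  unfolding front_def nondom_def using omm_nodom by auto

lemma pos_in: "distinct \<sigma> \<Longrightarrow> x \<in> set \<sigma> \<Longrightarrow> pos_in \<sigma> x < length \<sigma> \<and> \<sigma> ! pos_in \<sigma> x = x"
proof -
  assume d: "distinct \<sigma>" and x: "x \<in> set \<sigma>"
  then obtain p where p: "p < length \<sigma>" "\<sigma> ! p = x" by (auto simp: in_set_conv_nth)
  have "pos_in \<sigma> x = p" unfolding pos_in_def
    apply (rule the_equality) using p d nth_eq_iff_index_eq by auto
  then show ?thesis using p by simp
qed

lemma cd_abs:
  fixes v :: "nat \<Rightarrow> real"
  assumes mono: "\<And>i j. i \<le> j \<Longrightarrow> j < m \<Longrightarrow> v i \<le> v j" and p: "p < m"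
  defines "c \<equiv> (if p = 0 \<or> p = m - 1 then (\<infinity>::ereal) else if v (m-1) = v 0 then 0
     else ereal ((v (p+1) - v (p-1)) / (v (m-1) - v 0)))"
  shows "c \<ge> 0" and "c > 0 \<Longrightarrow> p = 0 \<or> v (p-1) \<noteq> v p \<or> p = m-1 \<or> v p \<noteq> v (p+1)"
    and "p = 0 \<or> v (p-1) \<noteq> v p \<Longrightarrow> c > 0"
proof -
  show "c \<ge> 0"
  proof (cases "p = 0 \<or> p = m - 1")
    case False
    have "v (p-1) \<le> v (p+1)" using mono[of "p-1" "p+1"] False p by auto
    moreover have "v 0 \<le> v (m-1)" using mono[of 0 "m-1"] p by auto
    ultimately show ?thesis using False unfolding c_def by auto
  qed (auto simp: c_def)
  show "c > 0 \<Longrightarrow> p = 0 \<or> v (p-1) \<noteq> v p \<or> p = m-1 \<or> v p \<noteq> v (p+1)"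
    unfolding c_def by (auto split: if_splits)
  show "p = 0 \<or> v (p-1) \<noteq> v p \<Longrightarrow> c > 0"
  proof -
    assume h: "p = 0 \<or> v (p-1) \<noteq> v p"
    show "c > 0"
    proof (cases "p = 0 \<or> p = m - 1")
      case False
      have a: "v (p-1) < v p" using h False mono[of "p-1" p] p by force
      have b: "v p \<le> v (p+1)" using mono[of p "p+1"] False p by auto
      have c1: "v 0 \<le> v (p-1)" using mono[of 0 "p-1"] p by auto
      have c2: "v p \<le> v (m-1)" using mono[of p "m-1"] p by auto
      have "v 0 < v (m-1)" using a c1 c2 by linarith
      moreover have "(v (p+1) - v (p-1)) / (v (m-1) - v 0) > 0"
        using a b \<open>v 0 < v (m-1)\<close> by (simp add: divide_pos_pos)
      ultimately show ?thesis using False unfolding c_def by auto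
    qed (auto simp: c_def)
  qed
qed

lemma block_count:
  fixes v :: "nat \<Rightarrow> real"
  assumes mono: "\<And>i j. i \<le> j \<Longrightarrow> j < m \<Longrightarrow> v i \<le> v j"
  shows "card {p. p < m \<and> (p = 0 \<or> v (p-1) \<noteq> v p \<or> p = m-1 \<or> v p \<noteq> v (p+1))}
           \<le> 2 * card (v ` {..<m})"
proof -
  define S where "S = {p. p < m \<and> (p = 0 \<or> v (p-1) \<noteq> v p \<or> p = m-1 \<or> v p \<noteq> v (p+1))}"
  define g where "g p = (v p, p = 0 \<or> v (p-1) \<noteq> v p)" for p
  have key: "False" if "p \<in> S" "q \<in> S" "p < q" "g p = g q" for p q
  proof (cases "p = 0 \<or> v (p-1) \<noteq> v p")
    case True
    then have "q = 0 \<or> v (q-1) \<noteq> v q" using that(4) unfolding g_def by auto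
    then have "v (q-1) \<noteq> v q" using that(3) by auto
    moreover have qm: "q < m" using that(2) unfolding S_def by auto
    moreover have "v p = v q" using that(4) unfolding g_def by auto
    moreover have "v p \<le> v (q-1)" using mono[of p "q-1"] that(3) qm by auto
    moreover have "v (q-1) \<le> v q" using mono[of "q-1" q] qm by auto
    ultimately show False by linarith
  next
    case False
    then have "p = m-1 \<or> v p \<noteq> v (p+1)" using that(1) unfolding S_def by auto
    moreover have "q < m" using that(2) unfolding S_def by auto
    ultimately have "v p \<noteq> v (p+1)" using that(3) by auto
    moreover have "v p = v q" using that(4) unfolding g_def by auto
    moreover have "v p \<le> v (p+1)" using mono[of p "p+1"] that(3) \<open>q < m\<close> by auto
    moreover have "v (p+1) \<le> v q" using mono[of "p+1" q] that(3) \<open>q < m\<close> by auto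
    ultimately show False by linarith
  qed
  have inj: "inj_on g S"
    by (rule inj_onI, metis key linorder_neqE_nat)
  have fin: "finite S" unfolding S_def by auto
  have "g ` S \<subseteq> v ` {..<m} \<times> UNIV" unfolding S_def g_def by auto
  then have "card (g ` S) \<le> card (v ` {..<m} \<times> (UNIV :: bool set))"
    by (intro card_mono) auto
  also have "\<dots> = 2 * card (v ` {..<m})" by (simp add: card_cartesian_product)
  finally show ?thesis using card_image[OF inj] S_def by simp
qed

lemma cd_unfold: "cd_contrib f R i \<sigma> p = (let m = length \<sigma>; v = (\<lambda>q. obj i (f (R ! (\<sigma> ! q)))) in
   if p = 0 \<or> p = m - 1 then \<infinity> else if v (m-1) = v 0 then 0
   else ereal ((v (p+1) - v (p-1)) / (v (m-1) - v 0)))"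
  unfolding cd_contrib_def Let_def by simp

lemma obj_vals:
  assumes "length y = n"
  shows "obj i (oneminmax n y) \<in> real ` {..n}"
proof -
  have le: "length (filter id y) \<le> n" using assms length_filter_le by metis
  show ?thesis
  proof (cases "i = 0")
    case True
    then have "obj i (oneminmax n y) = real (n - length (filter id y))"
      using le unfolding obj_def oneminmax_def by (simp add: of_nat_diff)
    then show ?thesis by auto
  next
    case False
    then show ?thesis using le unfolding obj_def oneminmax_def by auto
  qed
qed

lemma obj_side:
  assumes srt: "is_sorting (oneminmax n) R i {..<length R} \<sigma>"
    and len: "\<forall>y\<in>set R. length y = n"
  shows "\<And>j. j < length R \<Longrightarrow> cd_contrib (oneminmax n) R i \<sigma> (pos_in \<sigma> j) \<ge> 0"
   and "card {j\<in>{..<length R}. cd_contrib (oneminmax n) R i \<sigma> (pos_in \<sigma> j) > 0} \<le> 2*(n+1)"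
   and "\<And>j. j < length R \<Longrightarrow> (\<And>j'. j' < length R \<Longrightarrow> obj i (oneminmax n (R!j')) = obj i (oneminmax n (R!j))
          \<Longrightarrow> pos_in \<sigma> j \<le> pos_in \<sigma> j') \<Longrightarrow> cd_contrib (oneminmax n) R i \<sigma> (pos_in \<sigma> j) > 0"
proof -
  define f where "f = oneminmax n"
  define m where "m = length \<sigma>"
  define v where "v q = obj i (f (R ! (\<sigma> ! q)))" for q
  have d: "distinct \<sigma>" and st: "set \<sigma> = {..<length R}" and so: "sorted (map (\<lambda>j. obj i (f (R ! j))) \<sigma>)"
    using srt unfolding is_sorting_def f_def by auto
  have mono: "v a \<le> v b" if "a \<le> b" "b < m" for a b
    using sorted_nth_mono[OF so, of a b] that unfolding v_def m_def by auto
  have cdv: "cd_contrib f R i \<sigma> p = (if p = 0 \<or> p = m - 1 then \<infinity> else if v (m-1) = v 0 then 0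
     else ereal ((v (p+1) - v (p-1)) / (v (m-1) - v 0)))" for p
    unfolding cd_unfold Let_def v_def m_def by simp
  have pj: "pos_in \<sigma> j < m \<and> \<sigma> ! pos_in \<sigma> j = j" if "j < length R" for j
    using pos_in[OF d, of j] st that m_def by auto
  show "\<And>j. j < length R \<Longrightarrow> cd_contrib (oneminmax n) R i \<sigma> (pos_in \<sigma> j) \<ge> 0"
  proof -
    fix j assume j: "j < length R"
    have "cd_contrib f R i \<sigma> (pos_in \<sigma> j) \<ge> 0"
      unfolding cdv by (rule cd_abs(1)[OF mono], assumption+, use pj[OF j] in auto)
    then show "cd_contrib (oneminmax n) R i \<sigma> (pos_in \<sigma> j) \<ge> 0" using f_def by simp
  qed
  show "\<And>j. j < length R \<Longrightarrow> (\<And>j'. j' < length R \<Longrightarrow> obj i (oneminmax n (R!j')) = obj i (oneminmax n (R!j))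
          \<Longrightarrow> pos_in \<sigma> j \<le> pos_in \<sigma> j') \<Longrightarrow> cd_contrib (oneminmax n) R i \<sigma> (pos_in \<sigma> j) > 0"
  proof -
    fix j assume j: "j < length R" and mn: "\<And>j'. j' < length R \<Longrightarrow> obj i (oneminmax n (R!j')) = obj i (oneminmax n (R!j))
          \<Longrightarrow> pos_in \<sigma> j \<le> pos_in \<sigma> j'"
    define p where "p = pos_in \<sigma> j"
    have p: "p < m" "\<sigma> ! p = j" using pj[OF j] p_def by auto
    have "p = 0 \<or> v (p-1) \<noteq> v p"
    proof (rule ccontr)
      assume "\<not> (p = 0 \<or> v (p-1) \<noteq> v p)"
      then have h: "p \<noteq> 0" "v (p-1) = v p" by auto
      define j' where "j' = \<sigma> ! (p-1)"
      have "j' \<in> set \<sigma>" using p h unfolding j'_def m_def by auto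
      then have j': "j' < length R" using st by auto
      have pm: "p - 1 < length \<sigma>" using p m_def by auto
      have "pos_in \<sigma> j' < length \<sigma>" "\<sigma> ! pos_in \<sigma> j' = \<sigma> ! (p-1)"
        using pos_in[OF d \<open>j' \<in> set \<sigma>\<close>] j'_def by auto
      then have "pos_in \<sigma> j' = p - 1" using nth_eq_iff_index_eq[OF d _ pm] by blast
      moreover have "obj i (oneminmax n (R!j')) = obj i (oneminmax n (R!j))"
        using h p unfolding v_def j'_def f_def by simp
      ultimately show False using mn[OF j'] h p_def by auto
    qed
    note cc = cd_abs(3)[OF mono p(1) this]
    have "cd_contrib f R i \<sigma> p > 0"
      unfolding cdv using cc by simp
    then show "cd_contrib (oneminmax n) R i \<sigma> (pos_in \<sigma> j) > 0" using f_def p_def by simp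
  qed
  define S where "S = {p. p < m \<and> (p = 0 \<or> v (p-1) \<noteq> v p \<or> p = m-1 \<or> v p \<noteq> v (p+1))}"
  have sub: "{j\<in>{..<length R}. cd_contrib (oneminmax n) R i \<sigma> (pos_in \<sigma> j) > 0} \<subseteq> (\<lambda>q. \<sigma> ! q) ` S"
  proof
    fix j assume "j \<in> {j\<in>{..<length R}. cd_contrib (oneminmax n) R i \<sigma> (pos_in \<sigma> j) > 0}"
    then have j: "j < length R" "cd_contrib f R i \<sigma> (pos_in \<sigma> j) > 0" using f_def by auto
    have pl: "pos_in \<sigma> j < m" using pj[OF j(1)] by simp
    have "cd_contrib f R i \<sigma> (pos_in \<sigma> j) > 0" by (rule j(2))
    then have "(if pos_in \<sigma> j = 0 \<or> pos_in \<sigma> j = m - 1 then \<infinity> else if v (m-1) = v 0 then 0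
     else ereal ((v (pos_in \<sigma> j+1) - v (pos_in \<sigma> j-1)) / (v (m-1) - v 0))) > 0" unfolding cdv .
    from cd_abs(2)[OF mono pl this] pl have "pos_in \<sigma> j \<in> S" unfolding S_def by blast
    then show "j \<in> (\<lambda>q. \<sigma> ! q) ` S"
      by (rule image_eqI[rotated]) (use pj[OF j(1)] in simp)
  qed
  have "v ` {..<m} \<subseteq> real ` {..n}"
  proof
    fix a assume "a \<in> v ` {..<m}"
    then obtain q where q: "q < m" "a = v q" by auto
    have "\<sigma> ! q \<in> set \<sigma>" using q m_def by simp
    then have "\<sigma> ! q < length R" using st by auto
    then have "R ! (\<sigma> ! q) \<in> set R" by simp
    then have "length (R ! (\<sigma> ! q)) = n" using len by blast
    from obj_vals[OF this, of i] show "a \<in> real ` {..n}" using q unfolding v_def f_def by simp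
  qed
  then have "card (v ` {..<m}) \<le> card (real ` {..n})" by (intro card_mono) auto
  also have "\<dots> \<le> card {..n}" by (rule card_image_le) simp
  finally have cv: "card (v ` {..<m}) \<le> n + 1" by simp
  have "card S \<le> 2 * card (v ` {..<m})" unfolding S_def by (rule block_count[OF mono])
  from le_trans[OF this mult_le_mono2[OF cv]] have cS: "card S \<le> 2 * (n+1)" .
  have "finite S" unfolding S_def by auto
  then have "card {j\<in>{..<length R}. cd_contrib (oneminmax n) R i \<sigma> (pos_in \<sigma> j) > 0} \<le> card ((\<lambda>q. \<sigma> ! q) ` S)"
    by (intro card_mono[OF _ sub]) simp
  also have "\<dots> \<le> card S" by (rule card_image_le) fact
  finally show "card {j\<in>{..<length R}. cd_contrib (oneminmax n) R i \<sigma> (pos_in \<sigma> j) > 0} \<le> 2*(n+1)"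
    using cS by linarith
qed

theorem lemma1:
  fixes n N k :: nat and P Q :: "bool list list" and x :: "bool list" and sel :: "nat set"
  assumes "n \<ge> 1"
    and "N \<ge> 4 * (n + 1)"
    and "nsga2_reachable (oneminmax n) n N P"
    and "length Q = N" and "\<forall>y\<in>set Q. length y = n"
    and "k \<le> n"
    and "x \<in> set (P @ Q)" and "oneminmax n x = (real k, real (n - k))"
    and "nsga2_survivors (oneminmax n) N (P @ Q) sel"
  shows "\<exists>y\<in>set (next_pop (P @ Q) sel). oneminmax n y = (real k, real (n - k))"
proof (rule ccontr)
  assume neg: "\<not> ?thesis"
  define R where "R = P @ Q"
  define f where "f = oneminmax n"
  have len: "\<forall>y\<in>set R. length y = n" using reach_len[OF assms(3)] assms(5) R_def by auto
  have F: "front f R 0 = {..<length R}" using front0 f_def by simp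
  have lenR: "length R \<ge> N" using assms(4) R_def by simp
  have selsub: "sel \<subseteq> {..<length R}" using survivors_sub[OF assms(9)] R_def by simp
  from assms(9) obtain istar \<sigma>0 \<sigma>1 T where
    ist: "istar = (LEAST i. (\<Sum>j\<le>i. card (front f R j)) \<ge> N)" and
    s0: "is_sorting f R 0 (front f R istar) \<sigma>0" and
    s1: "is_sorting f R 1 (front f R istar) \<sigma>1" and
    Tsub: "T \<subseteq> front f R istar" and
    cT: "card T = N - (\<Sum>j<istar. card (front f R j))" and
    cmp: "\<forall>a\<in>T. \<forall>b\<in>front f R istar - T. cdis f R \<sigma>0 \<sigma>1 b \<le> cdis f R \<sigma>0 \<sigma>1 a" and
    selT: "sel = (\<Union>j<istar. front f R j) \<union> T"
    unfolding nsga2_survivors_def R_def f_def by blast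
  have "istar = 0" unfolding ist by (rule Least_eq_0) (use F lenR in simp)
  then have s0: "is_sorting (oneminmax n) R 0 {..<length R} \<sigma>0"
    and s1: "is_sorting (oneminmax n) R 1 {..<length R} \<sigma>1"
    and Tsub: "T \<subseteq> {..<length R}" and cT: "card T = N" and selT: "sel = T"
    and cmp: "\<forall>a\<in>T. \<forall>b\<in>{..<length R} - T. cdis f R \<sigma>0 \<sigma>1 b \<le> cdis f R \<sigma>0 \<sigma>1 a"
    using s0 s1 Tsub cT selT cmp F f_def by auto
  have nT: "fst (f (R ! j)) \<noteq> real k" if "j \<in> T" for j
  proof
    assume h: "fst (f (R ! j)) = real k"
    have "oneminmax n (R ! j) = (real k, real (n - k))"
      using h assms(6) unfolding f_def oneminmax_def by (auto simp: of_nat_diff)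
    moreover have "R ! j \<in> set (next_pop (P @ Q) sel)"
      using set_next_pop[OF selsub] that selT R_def by auto
    ultimately show False using neg by blast
  qed
  obtain i where i: "i < length R" "R ! i = x" proof -
    have "x \<in> set R" using assms(7) R_def by simp
    then show ?thesis using that by (metis in_set_conv_nth)
  qed
  have "\<exists>a. (a < length R \<and> obj 0 (f (R!a)) = real k) \<and>
     (\<forall>b. (b < length R \<and> obj 0 (f (R!b)) = real k) \<longrightarrow> pos_in \<sigma>0 a \<le> pos_in \<sigma>0 b)"
    by (rule ex_has_least_nat[of _ i]) (use i assms(8) in \<open>simp add: f_def obj_def\<close>)
  then obtain a where a: "a < length R" "obj 0 (f (R!a)) = real k"
    and amin: "\<And>b. b < length R \<Longrightarrow> obj 0 (f (R!b)) = real k \<Longrightarrow> pos_in \<sigma>0 a \<le> pos_in \<sigma>0 b"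
    by blast
  have c0a: "cd_contrib f R 0 \<sigma>0 (pos_in \<sigma>0 a) > 0"
    using obj_side(3)[OF s0 len a(1)] amin a(2) f_def by simp
  have c1a: "cd_contrib f R 1 \<sigma>1 (pos_in \<sigma>1 a) \<ge> 0"
    using obj_side(1)[OF s1 len a(1)] f_def by simp
  have "cd_contrib f R 0 \<sigma>0 (pos_in \<sigma>0 a) + 0 \<le> cd_contrib f R 0 \<sigma>0 (pos_in \<sigma>0 a) + cd_contrib f R 1 \<sigma>1 (pos_in \<sigma>1 a)"
    using c1a by (rule add_left_mono)
  then have cda: "cdis f R \<sigma>0 \<sigma>1 a > 0" unfolding cdis_def using c0a by simp
  have aT: "a \<notin> T" using nT a(2) unfolding obj_def by auto
  define Pos where "Pos = {j\<in>{..<length R}. cdis f R \<sigma>0 \<sigma>1 j > 0}"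
  have "insert a T \<subseteq> Pos"
  proof
    fix j assume "j \<in> insert a T"
    then show "j \<in> Pos"
    proof
      assume "j = a" then show ?thesis using a cda Pos_def by simp
    next
      assume jT: "j \<in> T"
      have "cdis f R \<sigma>0 \<sigma>1 a \<le> cdis f R \<sigma>0 \<sigma>1 j" using cmp jT aT a(1) by auto
      then show ?thesis using cda jT Tsub Pos_def by auto
    qed
  qed
  define P0 where "P0 = {j\<in>{..<length R}. cd_contrib (oneminmax n) R 0 \<sigma>0 (pos_in \<sigma>0 j) > 0}"
  define P1 where "P1 = {j\<in>{..<length R}. cd_contrib (oneminmax n) R 1 \<sigma>1 (pos_in \<sigma>1 j) > 0}"
  have "Pos \<subseteq> P0 \<union> P1"
  proof
    fix j assume "j \<in> Pos"
    then have j: "j < length R" "cdis f R \<sigma>0 \<sigma>1 j > 0" unfolding Pos_def by auto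
    have g0: "cd_contrib (oneminmax n) R 0 \<sigma>0 (pos_in \<sigma>0 j) \<ge> 0" by (rule obj_side(1)[OF s0 len j(1)])
    have g1: "cd_contrib (oneminmax n) R 1 \<sigma>1 (pos_in \<sigma>1 j) \<ge> 0" by (rule obj_side(1)[OF s1 len j(1)])
    show "j \<in> P0 \<union> P1"
    proof (rule ccontr)
      assume "j \<notin> P0 \<union> P1"
      then have "cd_contrib (oneminmax n) R 0 \<sigma>0 (pos_in \<sigma>0 j) = 0"
        "cd_contrib (oneminmax n) R 1 \<sigma>1 (pos_in \<sigma>1 j) = 0"
        using g0 g1 j(1) unfolding P0_def P1_def by auto
      then show False using j(2) unfolding cdis_def f_def by simp
    qed
  qed
  have "N + 1 = card (insert a T)"
    using aT cT finite_subset[OF Tsub] by simp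
  also have "\<dots> \<le> card Pos" by (rule card_mono[OF _ \<open>insert a T \<subseteq> Pos\<close>]) (simp add: Pos_def)
  also have "\<dots> \<le> card (P0 \<union> P1)" by (rule card_mono[OF _ \<open>Pos \<subseteq> P0 \<union> P1\<close>]) (simp add: P0_def P1_def)
  also have "\<dots> \<le> card P0 + card P1" by (rule card_Un_le)
  also have "\<dots> \<le> 2*(n+1) + 2*(n+1)"
    using obj_side(2)[OF s0 len] obj_side(2)[OF s1 len] unfolding P0_def P1_def by linarith
  finally show False using assms(2) by linarith
qed

end
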